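(* For every simple graph $G$ of order $n$, \[ \frac{n}{n - y(G) + 1} < \phi(G) + \frac{1}{3}. \]
   Context: Let $G$ have degrees $d_1 \ge \dots \ge d_n$. The number $y=y(G)$ is the unique real number $1 \le y \le n$ satisfying \[ y(y-1) = \sum_{k=1}^{\lfloor y \rfloor} d_k + (y - \lfloor y \rfloor)\, d_{\lceil y \rceil}. \] $\phi(G)$ is the smallest integer $r$ for which the vertex set has a partition $V(G) = V_1 \cup \dots \cup V_r$ into $r$ parts such that, writing $n_i = |V_i|$, every vertex $v \in V_i$ has degree $d(v) \le n - n_i$, for all $i = 1,\dots,r$. (It is known that $\phi(G)\le\omega(G)$, the clique number.) *)

theory Defs
  imports Complex_Main "HOL-Library.Multiset" "HOL-Library.Disjoint_Sets"
begin

definition simple_graph :: "'a set \<Rightarrow> ('a \<Rightarrow> 'a \<Rightarrow> bool) \<Rightarrow> bool" where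
  "simple_graph V E \<longleftrightarrow> finite V \<and>
     (\<forall>u v. E u v \<longrightarrow> u \<in> V \<and> v \<in> V \<and> u \<noteq> v \<and> E v u)"

definition degree :: "'a set \<Rightarrow> ('a \<Rightarrow> 'a \<Rightarrow> bool) \<Rightarrow> 'a \<Rightarrow> nat" where
  "degree V E v = card {u \<in> V. E v u}"

text \<open>Degree sequence in non-increasing order: d_1 \<ge> ... \<ge> d_n (0-indexed list).\<close>
definition degseq :: "'a set \<Rightarrow> ('a \<Rightarrow> 'a \<Rightarrow> bool) \<Rightarrow> nat list" where
  "degseq V E = rev (sorted_list_of_multiset (image_mset (degree V E) (mset_set V)))"

definition dk :: "'a set \<Rightarrow> ('a \<Rightarrow> 'a \<Rightarrow> bool) \<Rightarrow> nat \<Rightarrow> nat" where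
  "dk V E k = degseq V E ! (k - 1)"

definition y_G :: "'a set \<Rightarrow> ('a \<Rightarrow> 'a \<Rightarrow> bool) \<Rightarrow> real" where
  "y_G V E = (THE y. 1 \<le> y \<and> y \<le> real (card V) \<and>
     y * (y - 1) = (\<Sum>k = 1..nat \<lfloor>y\<rfloor>. real (dk V E k))
                   + (y - of_int \<lfloor>y\<rfloor>) * real (dk V E (nat \<lceil>y\<rceil>)))"

definition phi_G :: "'a set \<Rightarrow> ('a \<Rightarrow> 'a \<Rightarrow> bool) \<Rightarrow> nat" where
  "phi_G V E = (LEAST r. \<exists>P. partition_on V P \<and> card P = r \<and>
      (\<forall>A\<in>P. \<forall>v\<in>A. degree V E v \<le> card V - card A))"

end

theory Submission
  imports Defs
begin


lemma alg_final:
  fixes R x y m :: real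
  assumes R: "R \<ge> 1" and x: "x \<ge> 0" and y: "y \<ge> 1"
    and H: "R*m^2 + (y-m)^2 + R*x*m - R*y*(x+1) \<le> 0"
  shows "3*(y+x) < (3*R+4)*(x+1)"
proof (rule ccontr)
  assume "\<not> ?thesis"
  hence a: "3*(y - 1 - R*(x+1)) \<ge> x + 1" by (simp add: algebra_simps)
  have id: "4*(R+1)*(R*m^2 + (y-m)^2 + R*x*m - R*y*(x+1))
     = (2*(R+1)*m - (2*y-R*x))^2 + R*(4*y*(y-1-R*(x+1)) - R*x^2)"
    by (simp add: algebra_simps power2_eq_square)
  have b: "y \<ge> 1 + R*(x+1) + (x+1)/3" using a by (simp add: field_simps)
  have c: "4*y*(y-1-R*(x+1)) \<ge> 4*y*((x+1)/3)"
    using a y by (intro mult_left_mono) auto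
  have d: "4*y*((x+1)/3) \<ge> 4*(R*(x+1))*((x+1)/3)"
  proof -
    have "R*(x+1) \<le> y" using b x by (smt (verit) divide_nonneg_nonneg)
    thus ?thesis using x by (intro mult_right_mono mult_left_mono) auto
  qed
  have e: "4*(R*(x+1))*((x+1)/3) = R*(4/3*(x+1)^2)" by (simp add: power2_eq_square)
  have f: "R*(4/3*(x+1)^2) > R*x^2"
  proof -
    have h1: "(x+1)^2 > x^2" using x by (simp add: power2_eq_square algebra_simps)
    have h2: "(x+1)^2 \<ge> 0" by simp
    have "x^2 < 4/3*(x+1)^2" using h1 h2 by linarith
    thus ?thesis using R by simp
  qed
  have g: "4*y*(y-1-R*(x+1)) - R*x^2 > 0" using c d e f by linarith
  have "(2*(R+1)*m - (2*y-R*x))^2 + R*(4*y*(y-1-R*(x+1)) - R*x^2) > 0"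
    using g R by (smt (verit) mult_pos_pos zero_le_power2)
  hence "4*(R+1)*(R*m^2 + (y-m)^2 + R*x*m - R*y*(x+1)) > 0" using id by simp
  moreover have "4*(R+1) > 0" using R by simp
  ultimately have "R*m^2 + (y-m)^2 + R*x*m - R*y*(x+1) > 0"
    by (simp add: zero_less_mult_iff)
  with H show False by simp
qed

lemma key:
  fixes P :: "'b set" and W N :: "'b \<Rightarrow> real" and y n :: real
  assumes fin: "finite P" and ne: "P \<noteq> {}" and W0: "\<And>A. A\<in>P \<Longrightarrow> 0 \<le> W A"
    and WN: "\<And>A. A\<in>P \<Longrightarrow> W A \<le> N A" and sW: "sum W P = y" and sN: "sum N P = n"
    and ineq: "(\<Sum>A\<in>P. N A * W A) \<le> y*(n+1-y)" and y1: "1 \<le> y" and yn: "y \<le> n"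
  shows "n/(n - y + 1) < real(card P) + 1/3"
proof -
  define x where "x = n - y"
  have x0: "x \<ge> 0" using yn x_def by simp
  have pos: "n - y + 1 > 0" using yn by simp
  have goal: "3*(y+x) < (3*real(card P)+1)*(x+1) \<Longrightarrow> ?thesis"
    using pos by (simp add: x_def field_simps)
  obtain j where j: "j \<in> P" "\<And>A. A \<in> P \<Longrightarrow> W j \<le> W A"
    proof -
    have "Min (W ` P) \<in> W ` P" using fin ne by simp
    then obtain j where "j \<in> P" "W j = Min (W ` P)" by auto
    moreover have "\<And>A. A \<in> P \<Longrightarrow> Min (W ` P) \<le> W A" using fin by simp
    ultimately show ?thesis using that by metis
  qed
  define m where "m = W j"
  have s1: "(\<Sum>A\<in>P. N A * W A) = (\<Sum>A\<in>P. W A ^ 2) + (\<Sum>A\<in>P. W A * (N A - W A))"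
    proof -
    have "\<And>A. N A * W A = W A ^ 2 + W A * (N A - W A)" by (simp add: algebra_simps power2_eq_square)
    thus ?thesis by (simp add: sum.distrib[symmetric])
  qed
  have s2: "(\<Sum>A\<in>P. W A * (N A - W A)) \<ge> (\<Sum>A\<in>P. m * (N A - W A))"
  proof (rule sum_mono)
    fix A assume "A \<in> P"
    thus "m * (N A - W A) \<le> W A * (N A - W A)"
      using j WN by (intro mult_right_mono) (auto simp: m_def)
  qed
  have s3: "(\<Sum>A\<in>P. m * (N A - W A)) = m * x"
    by (simp add: sum_distrib_left[symmetric] sum_subtractf sW sN x_def)
  show ?thesis
  proof (cases "card P = 1")
    case True
    then obtain A where PA: "P = {A}" by (auto simp: card_Suc_eq)
    have "n * y \<le> y * (n+1-y)" using ineq sW sN PA by (simp add: mult.commute)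
    hence "n \<le> n+1-y" using y1 by simp
    hence "y = 1" using y1 by simp
    thus ?thesis using True yn by simp
  next
    case False
    hence c2: "card P \<ge> 2" using fin ne proof -
      have "card P \<noteq> 0" using fin ne by simp
      thus ?thesis using False by linarith
    qed
    define R where "R = real (card P) - 1"
    have R1: "R \<ge> 1" using c2 unfolding R_def by simp
    have cQ: "real (card (P - {j})) = R" using j fin c2 unfolding R_def by (simp add: of_nat_diff)
    have sq: "(\<Sum>A\<in>P. W A ^ 2) = m^2 + (\<Sum>A\<in>P-{j}. W A ^ 2)"
      using j fin m_def by (simp add: sum.remove)
    have sWQ: "(\<Sum>A\<in>P-{j}. W A) = y - m"
      using j fin m_def sW by (simp add: sum.remove)
    define c where "c = (y-m)/R"
    have "(\<Sum>A\<in>P-{j}. W A ^ 2) \<ge> (\<Sum>A\<in>P-{j}. 2*c*W A - c^2)"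
    proof (rule sum_mono)
      fix A show "2*c*W A - c^2 \<le> W A ^ 2"
        using sum_squares_ge_zero[of "W A - c" 0] by (simp add: power2_eq_square algebra_simps)
    qed
    also have "(\<Sum>A\<in>P-{j}. 2*c*W A - c^2) = 2*c*(y-m) - R*c^2"
      by (simp add: sum_subtractf sum_distrib_left[symmetric] sWQ cQ)
    also have "2*c*(y-m) - R*c^2 = (y-m)^2/R"
      using R1 by (simp add: c_def power2_eq_square field_simps)
    finally have cs: "(\<Sum>A\<in>P-{j}. W A ^ 2) \<ge> (y-m)^2/R" .
    have yx: "y*(n+1-y) = y*(x+1)" by (simp add: x_def)
    have "m^2 + (y-m)^2/R + m*x \<le> y*(x+1)"
      using ineq s1 s2 s3 sq cs yx by linarith
    hence "R*(m^2 + (y-m)^2/R + m*x) \<le> R*(y*(x+1))" using R1 by simp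
    moreover have "R*(m^2 + (y-m)^2/R + m*x) = R*m^2 + (y-m)^2 + R*x*m" using R1 by (simp add: field_simps)
    ultimately have H: "R*m^2 + (y-m)^2 + R*x*m - R*y*(x+1) \<le> 0" by (simp add: algebra_simps)
    have "3*(y+x) < (3*R+4)*(x+1)" by (rule alg_final[OF R1 x0 y1 H])
    thus ?thesis by (intro goal) (simp add: R_def algebra_simps)
  qed
qed



definition cw :: "nat \<Rightarrow> real \<Rightarrow> real" where
  "cw k y = min 1 (max 0 (y - real k))"

lemma cw_bounds: "0 \<le> cw k y" "cw k y \<le> 1" by (auto simp: cw_def)

lemma sum_cw:
  fixes d :: "nat \<Rightarrow> real"
  assumes y0: "0 \<le> y"
  shows "(\<Sum>k<N. d k * cw k y) = (\<Sum>k<min N (nat \<lfloor>y\<rfloor>). d k)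
          + (if nat \<lfloor>y\<rfloor> < N then (y - real (nat \<lfloor>y\<rfloor>)) * d (nat \<lfloor>y\<rfloor>) else 0)"
proof (induction N)
  case 0 then show ?case by simp
next
  case (Suc N)
  define K where "K = nat \<lfloor>y\<rfloor>"
  have K1: "real K \<le> y" "y < real K + 1" using y0 unfolding K_def
    by (auto simp: of_nat_nat)
  have "(\<Sum>k<Suc N. d k * cw k y) = (\<Sum>k<N. d k * cw k y) + d N * cw N y" by simp
  moreover
  { assume "N < K"
    hence "cw N y = 1" using K1 by (auto simp: cw_def)
    moreover have "min (Suc N) K = Suc (min N K)" using \<open>N < K\<close> by simp
    ultimately have ?case using Suc \<open>N < K\<close> unfolding K_def[symmetric] by simp }
  moreover
  { assume "N = K"
    hence "cw N y = y - real K" using K1 by (auto simp: cw_def)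
    hence ?case using Suc \<open>N = K\<close> unfolding K_def[symmetric] by (simp add: mult.commute) }
  moreover
  { assume "N > K"
    hence "cw N y = 0" using K1 by (auto simp: cw_def)
    hence ?case using Suc \<open>N > K\<close> unfolding K_def[symmetric] by simp }
  ultimately show ?case by linarith
qed

lemma sum_cw_1:
  assumes "0 \<le> y" "y \<le> real n"
  shows "(\<Sum>k<n. cw k y) = y"
proof -
  have "(\<Sum>k<n. 1 * cw k y) = (\<Sum>k<min n (nat \<lfloor>y\<rfloor>). 1)
          + (if nat \<lfloor>y\<rfloor> < n then (y - real (nat \<lfloor>y\<rfloor>)) * 1 else 0)"
    by (rule sum_cw[OF assms(1)])
  moreover have "nat \<lfloor>y\<rfloor> \<le> n" using floor_mono[OF assms(2)] by (simp add: nat_le_iff)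
  moreover have "y = n" if "\<not> nat \<lfloor>y\<rfloor> < n"
  proof -
    have "nat \<lfloor>y\<rfloor> = n" using that \<open>nat \<lfloor>y\<rfloor> \<le> n\<close> by simp
    hence "real n = of_int \<lfloor>y\<rfloor>" using assms(1) by (simp add: of_nat_nat[symmetric])
    hence "real n \<le> y" by (metis of_int_floor_le)
    thus ?thesis using assms by simp
  qed
  ultimately show ?thesis using assms by (auto simp: of_nat_nat)
qed

definition Sf :: "nat list \<Rightarrow> real \<Rightarrow> real" where
  "Sf D y = (\<Sum>k<length D. real (D!k) * cw k y)"

lemma Sf_def_form:
  assumes "1 \<le> y" "y \<le> real (length D)"
  shows "(\<Sum>k = 1..nat \<lfloor>y\<rfloor>. real (D ! (k - 1))) + (y - of_int \<lfloor>y\<rfloor>) * real (D ! (nat \<lceil>y\<rceil> - 1))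
         = Sf D y"
proof -
  define n where "n = length D"
  define K where "K = nat \<lfloor>y\<rfloor>"
  have K1: "real K \<le> y" "y < real K + 1" "of_int \<lfloor>y\<rfloor> = real K" using assms unfolding K_def
    by (auto simp: of_nat_nat)
  have Kn: "K \<le> n" using assms unfolding K_def n_def using floor_mono[OF assms(2)] by (simp add: nat_le_iff)
  have s1: "(\<Sum>k = 1..K. real (D ! (k - 1))) = (\<Sum>k<K. real (D ! k))"
  proof -
    have "(\<Sum>k = 1..K. real (D ! (k - 1))) = (\<Sum>k\<in>Suc ` {..<K}. real (D ! (k - 1)))"
      by (simp add: image_Suc_lessThan)
    also have "\<dots> = (\<Sum>k<K. real (D ! k))" by (subst sum.reindex) auto
    finally show ?thesis .
  qed
  have "Sf D y = (\<Sum>k<min n K. real (D!k))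
          + (if K < n then (y - real K) * real (D!K) else 0)"
    unfolding Sf_def n_def K_def using assms by (intro sum_cw) simp
  also have "\<dots> = (\<Sum>k = 1..K. real (D ! (k - 1))) + (y - of_int \<lfloor>y\<rfloor>) * real (D ! (nat \<lceil>y\<rceil> - 1))"
  proof (cases "y = real K")
    case True
    then show ?thesis using s1 Kn K1 by (simp add: min_absorb2)
  next
    case False
    hence "K < n" using Kn assms K1 n_def by linarith
    moreover have "\<lceil>y\<rceil> = int K + 1"
    proof -
      have "real K < y" using False K1 by simp
      thus ?thesis using K1 by (simp add: ceiling_eq_iff)
    qed
    hence "nat \<lceil>y\<rceil> = K + 1" by simp
    ultimately show ?thesis using s1 K1 by (simp add: min_absorb2)
  qed
  finally show ?thesis unfolding K_def by simp
qed



lemma ratio_mono: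
  assumes srt: "\<And>i j. i \<le> j \<Longrightarrow> j < length D \<Longrightarrow> D!j \<le> D!i"
    and y1: "0 < y1" and y12: "y1 \<le> y2" and y2: "y2 \<le> real (length D)"
  shows "y1 * Sf D y2 \<le> y2 * Sf D y1"
proof (cases "y1 = y2")
  case True then show ?thesis by simp
next
  case False
  define n where "n = length D"
  define t where "t = nat \<lfloor>y1\<rfloor>"
  define d where "d k = real (D!k)" for k
  define g where "g k = y1 * cw k y2 - y2 * cw k y1" for k
  have t1: "real t \<le> y1" "y1 < real t + 1" using y1 unfolding t_def by (auto simp: of_nat_nat)
  have tn: "t < n" using t1 False y12 y2 n_def by linarith
  have sg: "(\<Sum>k<n. g k) = 0"
    using sum_cw_1[of y1 n] sum_cw_1[of y2 n] y1 y12 y2 n_def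
    by (simp add: g_def sum_subtractf sum_distrib_left[symmetric])
  have "y1 * Sf D y2 - y2 * Sf D y1 = (\<Sum>k<n. d k * g k)"
    by (simp add: Sf_def n_def d_def g_def sum_distrib_left sum_subtractf[symmetric] algebra_simps)
  also have "\<dots> = (\<Sum>k<n. (d k - d t) * g k) + d t * (\<Sum>k<n. g k)"
    by (simp add: sum_distrib_left sum_subtractf left_diff_distrib)
  also have "\<dots> = (\<Sum>k<n. (d k - d t) * g k)" using sg by simp
  also have "\<dots> \<le> 0"
  proof (rule sum_nonpos)
    fix k assume k: "k \<in> {..<n}"
    show "(d k - d t) * g k \<le> 0"
    proof (cases "k < t")
      case True
      hence "d k \<ge> d t" using srt tn n_def d_def by simp
      moreover have "cw k y1 = 1" using True t1 by (auto simp: cw_def)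
      moreover have "y1 * cw k y2 \<le> y1" using y1 cw_bounds(2)[of k y2] by simp
      ultimately show ?thesis using y12 by (simp add: g_def mult_nonneg_nonpos)
    next
      case False
      show ?thesis
      proof (cases "k = t")
        case True then show ?thesis by simp
      next
        case False2: False
        hence "k > t" using False by simp
        hence "d k \<le> d t" using srt k n_def d_def by simp
        moreover have "cw k y1 = 0" using \<open>k > t\<close> t1 by (auto simp: cw_def)
        moreover have "y1 * cw k y2 \<ge> 0" using y1 cw_bounds(1)[of k y2] by simp
        ultimately show ?thesis by (simp add: g_def mult_nonpos_nonneg)
      qed
    qed
  qed
  finally show ?thesis by simp
qed

lemma Sf_cont: "continuous_on A (Sf D)"
  unfolding Sf_def cw_def by (intro continuous_intros)

lemma y_char:
  assumes srt: "\<And>i j. i \<le> j \<Longrightarrow> j < length D \<Longrightarrow> D!j \<le> D!i"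
    and bnd: "\<And>k. k < length D \<Longrightarrow> real (D!k) \<le> real (length D) - 1"
    and ne: "length D \<ge> 1"
  shows "\<exists>!y. 1 \<le> y \<and> y \<le> real (length D) \<and> y * (y - 1) = Sf D y"
proof -
  define n where "n = length D"
  define f where "f y = y * (y - 1) - Sf D y" for y
  have S0: "Sf D y \<ge> 0" for y unfolding Sf_def using cw_bounds by (intro sum_nonneg) simp
  have f1: "f 1 \<le> 0" using S0[of 1] by (simp add: f_def)
  have "Sf D (real n) = (\<Sum>k<n. real (D!k))"
    unfolding Sf_def n_def by (intro sum.cong) (auto simp: cw_def)
  also have "\<dots> \<le> (\<Sum>k<n. real n - 1)" using bnd n_def by (intro sum_mono) auto
  also have "\<dots> = real n * (real n - 1)" by simp
  finally have fn: "f (real n) \<ge> 0" by (simp add: f_def)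
  have "continuous_on {1..real n} f" unfolding f_def using Sf_cont by (intro continuous_intros) auto
  then obtain y where y: "1 \<le> y" "y \<le> real n" "f y = 0"
    using IVT'[of f 1 0 "real n"] f1 fn ne n_def by auto
  show ?thesis
  proof (rule ex1I[of _ y])
    show "1 \<le> y \<and> y \<le> real (length D) \<and> y * (y - 1) = Sf D y" using y n_def f_def by simp
  next
    fix z assume z: "1 \<le> z \<and> z \<le> real (length D) \<and> z * (z - 1) = Sf D z"
    have y': "y * (y-1) = Sf D y" using y f_def by simp
    show "z = y"
    proof (rule ccontr)
      assume "z \<noteq> y"
      hence "z < y \<or> y < z" by auto
      thus False
      proof
        assume "z < y"
        have "z * Sf D y \<le> y * Sf D z" using ratio_mono[OF srt, of z y] z y n_def \<open>z<y\<close> by simp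
        hence "z * (y * (y-1)) \<le> y * (z * (z-1))" using y' z by simp
        hence "z*y*y \<le> y*z*z" by (simp add: algebra_simps)
        hence "y \<le> z" using z y by simp
        thus False using \<open>z<y\<close> by simp
      next
        assume "y < z"
        have "y * Sf D z \<le> z * Sf D y" using ratio_mono[OF srt, of y z] z y n_def \<open>y<z\<close> by simp
        hence "y * (z * (z-1)) \<le> z * (y * (y-1))" using y' z by simp
        hence "y*z*z \<le> z*y*y" by (simp add: algebra_simps)
        hence "z \<le> y" using z y by simp
        thus False using \<open>y<z\<close> by simp
      qed
    qed
  qed
qed



lemma deg_le:
  assumes "simple_graph V E" "v \<in> V"
  shows "degree V E v \<le> card V - 1"
proof -
  have "{u \<in> V. E v u} \<subseteq> V - {v}" using assms by (auto simp: simple_graph_def)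
  hence "card {u \<in> V. E v u} \<le> card (V - {v})"
    using assms by (intro card_mono) (auto simp: simple_graph_def)
  thus ?thesis using assms by (simp add: degree_def)
qed

lemma degseq_vs:
  assumes "simple_graph V E"
  shows "\<exists>vs. distinct vs \<and> set vs = V \<and> degseq V E = map (degree V E) vs"
proof -
  have fin: "finite V" using assms by (simp add: simple_graph_def)
  obtain ws where ws: "distinct ws" "set ws = V" using finite_distinct_list[OF fin] by blast
  define vs where "vs = rev (sort_key (degree V E) ws)"
  have "sort (map (degree V E) ws) = map (degree V E) (sort_key (degree V E) ws)"
    by (rule properties_for_sort) (simp_all add: mset_map)
  moreover have "image_mset (degree V E) (mset_set V) = mset (map (degree V E) ws)"
    using ws mset_set_set[OF ws(1)] by (simp add: mset_map)
  moreover have "sorted_list_of_multiset (mset (map (degree V E) ws)) = sort (map (degree V E) ws)"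
    by (rule sorted_list_of_multiset_mset)
  ultimately have "degseq V E = map (degree V E) vs"
    unfolding degseq_def vs_def by (simp only: rev_map)
  moreover have "distinct vs" "set vs = V" using ws by (simp_all add: vs_def)
  ultimately show ?thesis by blast
qed

lemma degseq_sorted:
  assumes "i \<le> j" "j < length (degseq V E)"
  shows "degseq V E ! j \<le> degseq V E ! i"
proof -
  define L where "L = sorted_list_of_multiset (image_mset (degree V E) (mset_set V))"
  have D: "degseq V E = rev L" by (simp add: degseq_def L_def)
  have s: "sorted L" by (simp add: L_def)
  have "rev L ! j = L ! (length L - Suc j)" "rev L ! i = L ! (length L - Suc i)"
    using assms D by (simp_all add: rev_nth)
  moreover have "L ! (length L - Suc j) \<le> L ! (length L - Suc i)"
    using assms D by (intro sorted_nth_mono[OF s]) auto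
  ultimately show ?thesis using D by simp
qed



theorem theorem11:
  fixes V :: "'a set" and E :: "'a \<Rightarrow> 'a \<Rightarrow> bool"
  assumes "simple_graph V E" and "V \<noteq> {}"
  shows "real (card V) / (real (card V) - y_G V E + 1) < real (phi_G V E) + 1/3"
proof -
  have fin: "finite V" using assms by (simp add: simple_graph_def)
  define n where "n = card V"
  have n1: "n \<ge> 1" using fin assms(2) n_def by (simp add: Suc_le_eq card_gt_0_iff)
  obtain vs where vs: "distinct vs" "set vs = V" "degseq V E = map (degree V E) vs"
    using degseq_vs[OF assms(1)] by blast
  define D where "D = degseq V E"
  have lenvs: "length vs = n" using vs n_def distinct_card by fastforce
  have lenD: "length D = n" using vs lenvs D_def by simp
  have srt: "\<And>i j. i \<le> j \<Longrightarrow> j < length D \<Longrightarrow> D!j \<le> D!i" using degseq_sorted D_def by blast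
  have bnd: "\<And>k. k < length D \<Longrightarrow> real (D!k) \<le> real (length D) - 1"
  proof -
    fix k assume k: "k < length D"
    have "vs ! k \<in> V" using k lenD lenvs vs(2) by auto
    hence "D!k \<le> n - 1" using deg_le[OF assms(1)] k lenD lenvs vs(3) D_def n_def by simp
    thus "real (D!k) \<le> real (length D) - 1" using n1 lenD by linarith
  qed
  define Q where "Q y = (1 \<le> y \<and> y \<le> real (length D) \<and> y * (y - 1) = Sf D y)" for y
  have ex1: "\<exists>!y. Q y" unfolding Q_def by (rule y_char[OF srt bnd]) (use lenD n1 in auto)
  have eqQ: "(\<lambda>y. 1 \<le> y \<and> y \<le> real (card V) \<and>
     y * (y - 1) = (\<Sum>k = 1..nat \<lfloor>y\<rfloor>. real (dk V E k))
                   + (y - of_int \<lfloor>y\<rfloor>) * real (dk V E (nat \<lceil>y\<rceil>))) = Q"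
  proof
    fix y
    show "(1 \<le> y \<and> y \<le> real (card V) \<and>
     y * (y - 1) = (\<Sum>k = 1..nat \<lfloor>y\<rfloor>. real (dk V E k))
                   + (y - of_int \<lfloor>y\<rfloor>) * real (dk V E (nat \<lceil>y\<rceil>))) = Q y"
      unfolding Q_def dk_def D_def[symmetric] using Sf_def_form[of y D] lenD n_def by auto
  qed
  define y where "y = y_G V E"
  have Qy: "Q y" unfolding y_def y_G_def eqQ by (rule theI'[OF ex1])
  hence y1: "1 \<le> y" and yn: "y \<le> real n" and yeq: "y * (y - 1) = Sf D y"
    using lenD by (auto simp: Q_def)
  define PR where "PR r = (\<exists>P. partition_on V P \<and> card P = r \<and>
      (\<forall>A\<in>P. \<forall>v\<in>A. degree V E v \<le> card V - card A))" for r
  have "PR (card ((\<lambda>x. {x}) ` V))"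
    unfolding PR_def
  proof (intro exI conjI ballI)
    show "partition_on V ((\<lambda>x. {x}) ` V)" by (rule partition_on_singletons)
    fix A v assume "A \<in> (\<lambda>x. {x}) ` V" "v \<in> A"
    then have "A = {v}" "v \<in> V" by auto
    thus "degree V E v \<le> card V - card A" using deg_le[OF assms(1)] by simp
  qed simp
  hence "PR (phi_G V E)" unfolding phi_G_def PR_def[symmetric] by (rule LeastI)
  then obtain P where P: "partition_on V P" "card P = phi_G V E"
    "\<And>A v. A\<in>P \<Longrightarrow> v\<in>A \<Longrightarrow> degree V E v \<le> card V - card A"
    unfolding PR_def by blast
  have finP: "finite P" using finite_elements[OF fin P(1)] .
  have neP: "P \<noteq> {}" using P(1) assms(2) by (auto simp: partition_on_def)
  have subA: "\<And>A. A \<in> P \<Longrightarrow> A \<subseteq> V" using P(1) by (auto simp: partition_on_def)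
  have finA: "\<And>A. A \<in> P \<Longrightarrow> finite A" using subA fin finite_subset by blast
  define w where "w v = cw (inv_into {..<n} ((!) vs) v) y" for v
  have bij: "bij_betw ((!) vs) {..<n} V" using bij_betw_nth[OF vs(1)] lenvs vs(2) by simp
  have wk: "\<And>k. k < n \<Longrightarrow> w (vs!k) = cw k y"
    unfolding w_def using bij by (simp add: bij_betw_def inv_into_f_f)
  have w01: "0 \<le> w v" "w v \<le> 1" for v unfolding w_def using cw_bounds by auto
  have Sfw: "Sf D y = (\<Sum>v\<in>V. real (degree V E v) * w v)"
  proof -
    have "Sf D y = (\<Sum>k<n. real (degree V E (vs!k)) * w (vs!k))"
      unfolding Sf_def lenD using wk vs(3) D_def lenvs by (intro sum.cong) auto
    also have "\<dots> = (\<Sum>v\<in>V. real (degree V E v) * w v)"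
      by (rule sum.reindex_bij_betw[OF bij])
    finally show ?thesis .
  qed
  have sw: "(\<Sum>v\<in>V. w v) = y"
  proof -
    have "(\<Sum>v\<in>V. w v) = (\<Sum>k<n. w (vs!k))"
      by (rule sum.reindex_bij_betw[OF bij, symmetric])
    also have "\<dots> = (\<Sum>k<n. cw k y)" using wk by simp
    also have "\<dots> = y" using sum_cw_1 y1 yn by simp
    finally show ?thesis .
  qed
  define W :: "'a set \<Rightarrow> real" where "W A = (\<Sum>v\<in>A. w v)" for A
  define N :: "'a set \<Rightarrow> real" where "N A = real (card A)" for A
  have W0: "\<And>A. A\<in>P \<Longrightarrow> 0 \<le> W A" unfolding W_def using w01 by (simp add: sum_nonneg)
  have WN: "\<And>A. A\<in>P \<Longrightarrow> W A \<le> N A"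
  proof -
    fix A assume "A \<in> P"
    have "W A \<le> (\<Sum>v\<in>A. 1)" unfolding W_def using w01 by (intro sum_mono) auto
    thus "W A \<le> N A" by (simp add: N_def)
  qed
  have sW: "sum W P = y" unfolding W_def using sum.partition[OF fin P(1), of w] sw by metis
  have sN: "sum N P = real n"
    using product_partition[OF P(1) finA] n_def by (simp add: N_def)
  have "y * (y - 1) = (\<Sum>A\<in>P. \<Sum>v\<in>A. real (degree V E v) * w v)"
    using yeq Sfw sum.partition[OF fin P(1), of "\<lambda>v. real (degree V E v) * w v"] by simp
  also have "\<dots> \<le> (\<Sum>A\<in>P. \<Sum>v\<in>A. (real n - N A) * w v)"
  proof (intro sum_mono mult_right_mono)
    fix A v assume A: "A \<in> P" and v: "v \<in> A"
    have "card A \<le> card V" using card_mono[OF fin subA[OF A]] .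
    thus "real (degree V E v) \<le> real n - N A"
    proof -
      have "real (degree V E v) \<le> real (card V - card A)" using P(3)[OF A v] by simp
      also have "\<dots> = real (card V) - real (card A)" using \<open>card A \<le> card V\<close> by (rule of_nat_diff)
      finally show ?thesis using n_def N_def by simp
    qed
    show "0 \<le> w v" by (rule w01)
  qed
  also have "\<dots> = (\<Sum>A\<in>P. (real n - N A) * W A)" by (simp add: W_def sum_distrib_left)
  also have "\<dots> = real n * y - (\<Sum>A\<in>P. N A * W A)"
  proof -
    have "(\<Sum>A\<in>P. (real n - N A) * W A) = (\<Sum>A\<in>P. real n * W A - N A * W A)"
      by (simp add: left_diff_distrib)
    also have "\<dots> = (\<Sum>A\<in>P. real n * W A) - (\<Sum>A\<in>P. N A * W A)" by (rule sum_subtractf)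
    also have "(\<Sum>A\<in>P. real n * W A) = real n * y" using sW by (simp add: sum_distrib_left[symmetric])
    finally show ?thesis .
  qed
  finally have calc: "y * (y - 1) \<le> real n * y - (\<Sum>A\<in>P. N A * W A)" .
  have "y * (real n + 1 - y) = real n * y - y * (y - 1)" by (simp add: algebra_simps)
  hence ineq: "(\<Sum>A\<in>P. N A * W A) \<le> y * (real n + 1 - y)" using calc by linarith
  have "real n / (real n - y + 1) < real (card P) + 1/3"
    by (rule key[OF finP neP W0 WN sW sN ineq y1 yn])
  thus ?thesis using P(2) n_def y_def by simp
qed


end
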